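(* Let $G$ be a connected graph with $n$ vertices. Then \[ Kf(G)\leq\frac{n-1}{n}\sum_{i=1}^n\alpha_i(G)^{-1}. \]
   Context: $G$ is a finite simple graph with vertex set $[n]$ and Laplacian matrix $\mathcal{L}_G=D-A$. For a vertex $i$, $\alpha_i(G)=\min\{\mathbf{x}^\top\mathcal{L}_G\mathbf{x} : \mathbf{x}\in\mathbb{R}^n_+,\ \sum_j x_j^2=1,\ x_i=0\}$ (the inverse Perron value of $i$); for connected $G$ this equals the smallest eigenvalue of the principal submatrix $\mathcal{L}_G(i)$ obtained by deleting row and column $i$. The resistance distance $r_{ij}(G)$ is the effective resistance between $i$ and $j$ when every edge is a unit resistor, and the Kirchhoff index is $Kf(G)=\sum_{\{i,j\}\subseteq V(G)}r_{ij}(G)$ (sum over unordered pairs). *)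

theory Defs
  imports Complex_Main
begin

definition simple_graph :: "nat \<Rightarrow> (nat \<Rightarrow> nat \<Rightarrow> bool) \<Rightarrow> bool" where
  "simple_graph n E \<longleftrightarrow>
     (\<forall>u v. E u v \<longrightarrow> u \<in> {1..n} \<and> v \<in> {1..n}) \<and>
     (\<forall>u v. E u v \<longleftrightarrow> E v u) \<and> (\<forall>u. \<not> E u u)"

definition graph_connected :: "nat \<Rightarrow> (nat \<Rightarrow> nat \<Rightarrow> bool) \<Rightarrow> bool" where
  "graph_connected n E \<longleftrightarrow> (\<forall>u\<in>{1..n}. \<forall>v\<in>{1..n}. E\<^sup>*\<^sup>* u v)"

definition degree :: "nat \<Rightarrow> (nat \<Rightarrow> nat \<Rightarrow> bool) \<Rightarrow> nat \<Rightarrow> nat" where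
  "degree n E u = card {v \<in> {1..n}. E u v}"

definition laplacian :: "nat \<Rightarrow> (nat \<Rightarrow> nat \<Rightarrow> bool) \<Rightarrow> nat \<Rightarrow> nat \<Rightarrow> real" where
  "laplacian n E i j =
     (if i = j then real (degree n E i) else 0) - (if E i j then 1 else 0)"

definition lap_apply :: "nat \<Rightarrow> (nat \<Rightarrow> nat \<Rightarrow> bool) \<Rightarrow> (nat \<Rightarrow> real) \<Rightarrow> nat \<Rightarrow> real" where
  "lap_apply n E x i = (\<Sum>j=1..n. laplacian n E i j * x j)"

definition lap_quad :: "nat \<Rightarrow> (nat \<Rightarrow> nat \<Rightarrow> bool) \<Rightarrow> (nat \<Rightarrow> real) \<Rightarrow> real" where
  "lap_quad n E x = (\<Sum>i=1..n. x i * lap_apply n E x i)"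

text \<open>Inverse Perron value alpha_i(G): minimum of x^T L x over nonnegative unit
  vectors with x_i = 0 (written as an infimum; the minimum is attained).\<close>
definition inverse_perron :: "nat \<Rightarrow> (nat \<Rightarrow> nat \<Rightarrow> bool) \<Rightarrow> nat \<Rightarrow> real" where
  "inverse_perron n E i =
     Inf {lap_quad n E x | x. (\<forall>j\<in>{1..n}. x j \<ge> 0) \<and> (\<Sum>j=1..n. (x j)\<^sup>2) = 1 \<and> x i = 0}"

text \<open>Effective resistance: inject a unit current at i and extract it at j;
  the node potentials v satisfy L v = e_i - e_j and r_ij = v_i - v_j.\<close>
definition resistance :: "nat \<Rightarrow> (nat \<Rightarrow> nat \<Rightarrow> bool) \<Rightarrow> nat \<Rightarrow> nat \<Rightarrow> real" where
  "resistance n E i j =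
     (THE r. \<exists>v. (\<forall>u\<in>{1..n}. lap_apply n E v u =
                    (if u = i then 1 else 0) - (if u = j then 1 else 0)) \<and> r = v i - v j)"

definition kirchhoff :: "nat \<Rightarrow> (nat \<Rightarrow> nat \<Rightarrow> bool) \<Rightarrow> real" where
  "kirchhoff n E = (\<Sum>i=1..n. \<Sum>j=i+1..n. resistance n E i j)"

end

theory Submission
  imports Defs "Jordan_Normal_Form.Determinant"
begin

definition bil :: "nat \<Rightarrow> (nat \<Rightarrow> nat \<Rightarrow> bool) \<Rightarrow> (nat \<Rightarrow> real) \<Rightarrow> (nat \<Rightarrow> real) \<Rightarrow> real" where
  "bil n E x y = (\<Sum>u=1..n. x u * lap_apply n E y u)"

definition ED :: "nat \<Rightarrow> (nat \<Rightarrow> nat \<Rightarrow> bool) \<Rightarrow> (nat \<times> nat) set" where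
  "ED n E = {p \<in> {1..n}\<times>{1..n}. E (fst p) (snd p)}"

lemma lap_apply_edge:
  assumes "simple_graph n E"
  shows "lap_apply n E y u = (\<Sum>v=1..n. if E u v then y u - y v else 0)"
proof -
  have irr: "\<not> E u u" using assms by (simp add: simple_graph_def)
  have deg: "real (Defs.degree n E u) = (\<Sum>v=1..n. if E u v then 1 else 0)"
    unfolding Defs.degree_def by (simp add: sum.If_cases Int_def conj_commute)
  have "lap_apply n E y u = (\<Sum>j=1..n. (if u = j then real (Defs.degree n E u) else 0) * y j) - (\<Sum>j=1..n. (if E u j then 1 else 0) * y j)"
    unfolding lap_apply_def laplacian_def by (simp add: left_diff_distrib sum_subtractf)
  also have "(\<Sum>j=1..n. (if u = j then real (Defs.degree n E u) else 0) * y j) = (if u \<in> {1..n} then real (Defs.degree n E u) * y u else 0)"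
  proof -
    have h: "(\<lambda>j. (if u = j then real (Defs.degree n E u) else 0) * y j) = (\<lambda>j. if u = j then real (Defs.degree n E u) * y u else 0)"
      by auto
    show ?thesis by (simp only: h sum.delta' finite_atLeastAtMost)
  qed
  also have "\<dots> = (\<Sum>v=1..n. if E u v then y u else 0)"
  proof (cases "u \<in> {1..n}")
    case True then show ?thesis by (auto simp add: deg sum_distrib_right intro!: sum.cong)
  next
    case False
    then have "\<And>v. \<not> E u v" using assms by (auto simp: simple_graph_def)
    then show ?thesis using False by auto
  qed
  finally show ?thesis by (simp add: sum_subtractf[symmetric]) (auto intro!: sum.cong)
qed

lemma double_ED:
  "(\<Sum>u=1..n. \<Sum>v=1..n. if E u v then f u v else 0) = (\<Sum>p\<in>ED n E. f (fst p) (snd p))"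
proof -
  have "(\<Sum>u=1..n. \<Sum>v=1..n. if E u v then f u v else 0) = (\<Sum>p\<in>{1..n}\<times>{1..n}. if E (fst p) (snd p) then f (fst p) (snd p) else 0)"
    by (simp add: sum.cartesian_product case_prod_beta)
  also have "\<dots> = (\<Sum>p\<in>ED n E. f (fst p) (snd p))"
    unfolding ED_def by (rule sum.inter_filter[symmetric]) simp
  finally show ?thesis .
qed

lemma bil_edge2:
  assumes "simple_graph n E"
  shows "bil n E x y = (\<Sum>u=1..n. \<Sum>v=1..n. if E u v then (x u - x v) * (y u - y v) else 0) / 2"
proof -
  have sym: "\<And>u v. E u v = E v u" using assms by (simp add: simple_graph_def)
  have A: "bil n E x y = (\<Sum>u=1..n. \<Sum>v=1..n. if E u v then x u * (y u - y v) else 0)"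
    unfolding bil_def lap_apply_edge[OF assms] by (simp add: sum_distrib_left if_distrib cong: if_cong)
  also have "\<dots> = (\<Sum>v=1..n. \<Sum>u=1..n. if E u v then x u * (y u - y v) else 0)"
    by (rule sum.swap)
  also have "\<dots> = (\<Sum>u=1..n. \<Sum>v=1..n. if E u v then - (x v * (y u - y v)) else 0)"
    by (intro sum.cong refl) (simp add: sym[of _ "_::nat"] algebra_simps)
  finally have B: "bil n E x y = (\<Sum>u=1..n. \<Sum>v=1..n. if E u v then - (x v * (y u - y v)) else 0)" .
  have "2 * bil n E x y = (\<Sum>u=1..n. \<Sum>v=1..n. (if E u v then x u * (y u - y v) else 0) + (if E u v then - (x v * (y u - y v)) else 0))"
    using A B by (simp add: sum.distrib)
  also have "\<dots> = (\<Sum>u=1..n. \<Sum>v=1..n. if E u v then (x u - x v) * (y u - y v) else 0)"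
    by (auto intro!: sum.cong simp: algebra_simps)
  finally show ?thesis by simp
qed

lemma bil_edge:
  assumes "simple_graph n E"
  shows "bil n E x y = (\<Sum>p\<in>ED n E. (x (fst p) - x (snd p)) * (y (fst p) - y (snd p))) / 2"
  unfolding bil_edge2[OF assms] double_ED[where f="\<lambda>u v. (x u - x v) * (y u - y v)"] ..

lemma bil_sym: "simple_graph n E \<Longrightarrow> bil n E x y = bil n E y x"
  by (simp add: bil_edge mult.commute)

lemma bil_nonneg: "simple_graph n E \<Longrightarrow> bil n E x x \<ge> 0"
  by (simp add: bil_edge sum_nonneg)

lemma CS_sum:
  fixes a :: "'a \<Rightarrow> real"
  shows "(\<Sum>i\<in>I. a i * b i)\<^sup>2 \<le> (\<Sum>i\<in>I. (a i)\<^sup>2) * (\<Sum>i\<in>I. (b i)\<^sup>2)"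
proof (cases "(\<Sum>i\<in>I. (b i)\<^sup>2) > 0")
  case False
  then consider "\<And>i. i\<in>I \<Longrightarrow> b i = 0" | "infinite I"
    by (metis (mono_tags, lifting) sum_pos2 zero_le_power2 zero_less_power2)
  thus ?thesis
    by fastforce
next
  case True
  define r where "r \<equiv> (\<Sum>i\<in>I. a i * b i) / (\<Sum>i\<in>I. (b i)\<^sup>2)"
  have "0 \<le> (\<Sum>i\<in>I. (a i - r * b i)\<^sup>2)"
    by (simp add: sum_nonneg)
  also have "... = (\<Sum>i\<in>I. (a i)\<^sup>2) - 2 * r * (\<Sum>i\<in>I. a i * b i) + r\<^sup>2 * (\<Sum>i\<in>I. (b i)\<^sup>2)"
    by (simp add: algebra_simps power2_eq_square sum_distrib_left flip: sum.distrib)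
  also have "\<dots> = (\<Sum>i\<in>I. (a i)\<^sup>2) - ((\<Sum>i\<in>I. a i * b i))\<^sup>2 / (\<Sum>i\<in>I. (b i)\<^sup>2)"
    by (simp add: r_def power2_eq_square)
  finally have "0 \<le> (\<Sum>i\<in>I. (a i)\<^sup>2) - ((\<Sum>i\<in>I. a i * b i))\<^sup>2 / (\<Sum>i\<in>I. (b i)\<^sup>2)" .
  hence "((\<Sum>i\<in>I. a i * b i))\<^sup>2 / (\<Sum>i\<in>I. (b i)\<^sup>2) \<le> (\<Sum>i\<in>I. (a i)\<^sup>2)"
    by linarith
  thus ?thesis using True by (simp add: divide_le_eq)
qed

lemma bil_CS:
  assumes "simple_graph n E"
  shows "(bil n E x y)\<^sup>2 \<le> bil n E x x * bil n E y y"
proof -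
  have "(\<Sum>p\<in>ED n E. (x (fst p) - x (snd p)) * (y (fst p) - y (snd p)))\<^sup>2
     \<le> (\<Sum>p\<in>ED n E. (x (fst p) - x (snd p))\<^sup>2) * (\<Sum>p\<in>ED n E. (y (fst p) - y (snd p))\<^sup>2)"
    by (rule CS_sum)
  then show ?thesis unfolding bil_edge[OF assms] by (simp add: power2_eq_square power_divide)
qed

lemma bil_abs:
  assumes "simple_graph n E"
  shows "bil n E (\<lambda>u. \<bar>x u\<bar>) (\<lambda>u. \<bar>x u\<bar>) \<le> bil n E x x"
  unfolding bil_edge[OF assms]
proof -
  have "(\<Sum>p\<in>ED n E. (\<bar>x (fst p)\<bar> - \<bar>x (snd p)\<bar>) * (\<bar>x (fst p)\<bar> - \<bar>x (snd p)\<bar>))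
     \<le> (\<Sum>p\<in>ED n E. (x (fst p) - x (snd p)) * (x (fst p) - x (snd p)))"
  proof (rule sum_mono)
    fix p
    show "(\<bar>x (fst p)\<bar> - \<bar>x (snd p)\<bar>) * (\<bar>x (fst p)\<bar> - \<bar>x (snd p)\<bar>) \<le> (x (fst p) - x (snd p)) * (x (fst p) - x (snd p))"
      by (metis abs_ge_zero abs_mult_self_eq abs_triangle_ineq3 mult_mono)
  qed
  then show "(\<Sum>p\<in>ED n E. (\<bar>x (fst p)\<bar> - \<bar>x (snd p)\<bar>) * (\<bar>x (fst p)\<bar> - \<bar>x (snd p)\<bar>)) / 2
     \<le> (\<Sum>p\<in>ED n E. (x (fst p) - x (snd p)) * (x (fst p) - x (snd p))) / 2" by simp
qed

lemma lap_diff: "lap_apply n E (\<lambda>u. f u - g u) w = lap_apply n E f w - lap_apply n E g w"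
  unfolding lap_apply_def by (simp add: right_diff_distrib sum_subtractf)

lemma lap_scale: "lap_apply n E (\<lambda>u. c * f u) w = c * lap_apply n E f w"
  unfolding lap_apply_def by (simp add: sum_distrib_left algebra_simps)

lemma lap_const: assumes "simple_graph n E" shows "lap_apply n E (\<lambda>u. k0) w = 0"
  unfolding lap_apply_edge[OF assms] by (simp cong: if_cong)

lemma lap_add_const: assumes "simple_graph n E" shows "lap_apply n E (\<lambda>u. f u + k0) w = lap_apply n E f w"
  unfolding lap_apply_edge[OF assms] by (simp cong: if_cong)

lemma lap_sum_zero:
  assumes "simple_graph n E"
  shows "(\<Sum>u=1..n. lap_apply n E v u) = 0"
proof -
  have "(\<Sum>u=1..n. lap_apply n E v u) = bil n E (\<lambda>_. 1) v" by (simp add: bil_def)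
  also have "\<dots> = bil n E v (\<lambda>_. 1)" by (rule bil_sym[OF assms])
  also have "\<dots> = 0" by (simp add: bil_def lap_const[OF assms])
  finally show ?thesis .
qed

lemma kernel_const:
  assumes g: "simple_graph n E" and c: "graph_connected n E"
    and h: "\<forall>u\<in>{1..n}. lap_apply n E v u = 0"
    and a: "a \<in> {1..n}" and b: "b \<in> {1..n}"
  shows "v a = v b"
proof -
  have "bil n E v v = 0" using h by (simp add: bil_def)
  then have "(\<Sum>p\<in>ED n E. (v (fst p) - v (snd p)) * (v (fst p) - v (snd p))) = 0"
    by (simp add: bil_edge[OF g])
  then have z: "\<forall>p\<in>ED n E. (v (fst p) - v (snd p)) * (v (fst p) - v (snd p)) = 0"
    by (subst sum_nonneg_eq_0_iff[symmetric]) (auto simp: ED_def)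
  have edge: "v x = v y" if "E x y" for x y
  proof -
    have "(x, y) \<in> ED n E" using that g by (auto simp: ED_def simple_graph_def)
    then show ?thesis using z by fastforce
  qed
  have "E\<^sup>*\<^sup>* a b" using c a b by (simp add: graph_connected_def)
  then show ?thesis
    by (induction rule: rtranclp_induct) (auto dest: edge)
qed

lemma shift_sum: "(\<Sum>c<n. f (Suc c)) = (\<Sum>u=1..n. (f u :: real))"
  by (induction n) (auto simp: sum.atLeast_Suc_atMost_Suc_shift)

definition gmat :: "nat \<Rightarrow> (nat \<Rightarrow> nat \<Rightarrow> bool) \<Rightarrow> real mat" where
  "gmat n E = mat n n (\<lambda>(a,c). laplacian n E (Suc a) (Suc c) + (if a = 0 \<and> c = 0 then 1 else 0))"

lemma gmat_apply:
  assumes n: "n \<ge> 1" and y: "dim_vec y = n" and k: "k < n"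
  shows "(gmat n E *\<^sub>v y) $ k = lap_apply n E (\<lambda>u. y $ (u - 1)) (Suc k) + (if k = 0 then y $ 0 else 0)"
proof -
  have "(gmat n E *\<^sub>v y) $ k = (\<Sum>c\<in>{0..<n}. (laplacian n E (Suc k) (Suc c) + (if k = 0 \<and> c = 0 then 1 else 0)) * y $ c)"
    using k y by (simp add: gmat_def scalar_prod_def)
  also have "\<dots> = (\<Sum>c<n. laplacian n E (Suc k) (Suc c) * y $ (Suc c - 1)) + (\<Sum>c<n. (if k = 0 \<and> c = 0 then y $ c else 0))"
    by (unfold atLeast0LessThan sum.distrib[symmetric], intro sum.cong refl, auto simp: distrib_right)
  also have "(\<Sum>c<n. laplacian n E (Suc k) (Suc c) * y $ (Suc c - 1)) = lap_apply n E (\<lambda>u. y $ (u - 1)) (Suc k)"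
    unfolding lap_apply_def by (rule shift_sum[where f="\<lambda>u. laplacian n E (Suc k) u * y $ (u - 1)"])
  also have "(\<Sum>c<n. (if k = 0 \<and> c = 0 then y $ c else 0)) = (if k = 0 then y $ 0 else 0)"
    using n by (auto simp: sum.delta')
  finally show ?thesis .
qed

lemma exists_solution:
  assumes g: "simple_graph n E" and c: "graph_connected n E" and n: "n \<ge> 1"
    and b: "(\<Sum>u=1..n. b u) = 0"
  shows "\<exists>v. \<forall>u\<in>{1..n}. lap_apply n E v u = b u"
proof -
  have A: "gmat n E \<in> carrier_mat n n" by (simp add: gmat_def)
  have "det (gmat n E) \<noteq> 0"
  proof
    assume "det (gmat n E) = 0"
    then obtain y where y: "y \<in> carrier_vec n" "y \<noteq> 0\<^sub>v n" "gmat n E *\<^sub>v y = 0\<^sub>v n"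
      using det_0_iff_vec_prod_zero_field[OF A] by blast
    define x where "x = (\<lambda>u. y $ (u - 1))"
    have dy: "dim_vec y = n" using y(1) by simp
    have eq: "lap_apply n E x u + (if u = 1 then x 1 else 0) = 0" if u: "u \<in> {1..n}" for u
    proof -
      have "u - 1 < n" using u by auto
      then have "(gmat n E *\<^sub>v y) $ (u - 1) = 0" using y(3) by simp
      moreover have "Suc (u - 1) = u" using u by simp
      ultimately show ?thesis using gmat_apply[OF n dy, of "u - 1"] u by (auto simp: x_def)
    qed
    have "(\<Sum>u=1..n. lap_apply n E x u + (if u = 1 then x 1 else 0)) = 0"
      using eq by simp
    then have "(\<Sum>u=1..n. lap_apply n E x u) + x 1 = 0"
      using n by (simp add: sum.distrib sum.delta)
    then have x1: "x 1 = 0" using lap_sum_zero[OF g] by simp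
    have "\<forall>u\<in>{1..n}. lap_apply n E x u = 0"
    proof
      fix u assume "u \<in> {1..n}"
      then show "lap_apply n E x u = 0" using eq[of u] x1 by (cases "u = 1") auto
    qed
    then have "x u = x 1" if "u \<in> {1..n}" for u
      using kernel_const[OF g c _ that, of x 1] n by simp
    then have "y $ k = 0" if "k < n" for k
      using x1 that unfolding x_def by (metis One_nat_def Suc_leI add_diff_cancel_left' atLeastAtMost_iff le_add1 plus_1_eq_Suc)
    then have "y = 0\<^sub>v n" using dy by (intro eq_vecI) auto
    with y(2) show False by simp
  qed
  from det_non_zero_imp_unit[OF A this, of "()"]
  obtain B where B: "B \<in> carrier_mat n n" "gmat n E * B = 1\<^sub>m n"
    unfolding Units_def ring_mat_def by auto
  define bv where "bv = vec n (\<lambda>k. b (Suc k))"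
  define y where "y = B *\<^sub>v bv"
  have dy: "dim_vec y = n" using B by (simp add: y_def)
  have "gmat n E *\<^sub>v y = bv"
    unfolding y_def using B A by (simp add: bv_def assoc_mult_mat_vec[symmetric, of _ n n _ n])
  define v where "v = (\<lambda>u. y $ (u - 1))"
  have eq: "lap_apply n E v u + (if u = 1 then v 1 else 0) = b u" if u: "u \<in> {1..n}" for u
  proof -
    have "u - 1 < n" "Suc (u - 1) = u" using u by auto
    then have "(gmat n E *\<^sub>v y) $ (u - 1) = b u" using \<open>gmat n E *\<^sub>v y = bv\<close> by (simp add: bv_def)
    moreover have "Suc (u - 1) = u" using u by simp
    ultimately show ?thesis using gmat_apply[OF n dy, of "u - 1"] u by (auto simp: v_def)
  qed
  have "(\<Sum>u=1..n. lap_apply n E v u + (if u = 1 then v 1 else 0)) = 0"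
    using eq b by simp
  then have "(\<Sum>u=1..n. lap_apply n E v u) + v 1 = 0"
    using n by (simp add: sum.distrib sum.delta)
  then have v1: "v 1 = 0" using lap_sum_zero[OF g] by simp
  show ?thesis
  proof (intro exI ballI)
    fix u assume "u \<in> {1..n}"
    then show "lap_apply n E v u = b u" using eq[of u] v1 by (cases "u = 1") auto
  qed
qed

lemma bil_diff: "bil n E x (\<lambda>u. f u - h u) = bil n E x f - bil n E x h"
  unfolding bil_def lap_diff by (simp add: right_diff_distrib sum_subtractf)

lemma bil_scale2: "bil n E x (\<lambda>u. c * f u) = c * bil n E x f"
  unfolding bil_def lap_scale by (simp add: sum_distrib_left algebra_simps)

lemma bil_scale1: "bil n E (\<lambda>u. c * f u) y = c * bil n E f y"
  unfolding bil_def by (simp add: sum_distrib_left algebra_simps)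

lemma lap_quad_bil: "lap_quad n E x = bil n E x x"
  unfolding lap_quad_def bil_def ..

lemma pair_sum:
  fixes n :: nat
  assumes "\<And>i j. f i j = f j i" "\<And>i. f i i = (0::real)"
  shows "2 * (\<Sum>i=1..n. \<Sum>j=i+1..n. f i j) = (\<Sum>i=1..n. \<Sum>j=1..n. f i j)"
proof (induction n)
  case 0 then show ?case by simp
next
  case (Suc n)
  have L: "(\<Sum>i=1..Suc n. \<Sum>j=i+1..Suc n. f i j) = (\<Sum>i=1..n. \<Sum>j=i+1..n. f i j) + (\<Sum>i=1..n. f i (Suc n))"
  proof -
    have "(\<Sum>i=1..Suc n. \<Sum>j=i+1..Suc n. f i j) = (\<Sum>i=1..n. \<Sum>j=i+1..Suc n. f i j)"
      by simp
    also have "\<dots> = (\<Sum>i=1..n. (\<Sum>j=i+1..n. f i j) + f i (Suc n))"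
      by (intro sum.cong refl) simp
    finally show ?thesis by (simp add: sum.distrib)
  qed
  have R: "(\<Sum>i=1..Suc n. \<Sum>j=1..Suc n. f i j) = (\<Sum>i=1..n. \<Sum>j=1..n. f i j) + 2 * (\<Sum>i=1..n. f i (Suc n))"
  proof -
    have "(\<Sum>i=1..Suc n. \<Sum>j=1..Suc n. f i j) = (\<Sum>i=1..n. (\<Sum>j=1..n. f i j) + f i (Suc n)) + ((\<Sum>j=1..n. f (Suc n) j) + f (Suc n) (Suc n))"
      by simp
    also have "(\<Sum>j=1..n. f (Suc n) j) = (\<Sum>i=1..n. f i (Suc n))" using assms(1) by metis
    finally show ?thesis using assms(2) by (simp add: sum.distrib)
  qed
  show ?case using L R Suc.IH by simp
qed

theorem corollary4p3:
  fixes n :: nat and E :: "nat \<Rightarrow> nat \<Rightarrow> bool"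
  assumes "simple_graph n E" and "graph_connected n E"
  shows "kirchhoff n E \<le> (real n - 1) / real n * (\<Sum>i=1..n. inverse (inverse_perron n E i))"
proof (cases "n \<ge> 2")
  case False
  then have "n = 0 \<or> n = 1" by auto
  then show ?thesis by (auto simp: kirchhoff_def)
next
  case True
  note g = assms(1) and c = assms(2)
  have n1: "n \<ge> 1" using True by simp
  have rn: "real n > 0" using n1 by simp
  have "\<forall>b\<in>{1..n}. \<exists>v. (\<forall>a\<in>{1..n}. lap_apply n E v a = (if a = b then 1 else 0) - 1 / real n) \<and> (\<Sum>a=1..n. v a) = 0"
  proof
    fix b assume b: "b \<in> {1..n}"
    have "(\<Sum>a=1..n. (if a = b then 1 else 0) - 1 / real n) = 0"
      using b rn by (simp add: sum_subtractf)
    then obtain v where v: "\<forall>a\<in>{1..n}. lap_apply n E v a = (if a = b then 1 else 0) - 1 / real n"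
      using exists_solution[OF g c n1] by blast
    define m where "m = (\<Sum>a=1..n. v a) / real n"
    have "\<forall>a\<in>{1..n}. lap_apply n E (\<lambda>u. v u + (- m)) a = (if a = b then 1 else 0) - 1 / real n"
    proof -
      have e: "\<And>a. lap_apply n E (\<lambda>u. v u + (- m)) a = lap_apply n E v a" by (rule lap_add_const[OF g])
      show ?thesis using v by (simp only: e)
    qed
    moreover have "(\<Sum>a=1..n. v a + - m) = 0" using rn by (simp add: m_def sum.distrib sum_subtractf)
    ultimately show "\<exists>v. (\<forall>a\<in>{1..n}. lap_apply n E v a = (if a = b then 1 else 0) - 1 / real n) \<and> (\<Sum>a=1..n. v a) = 0"
      by blast
  qed
  then obtain g0 where g0: "\<forall>b\<in>{1..n}. (\<forall>a\<in>{1..n}. lap_apply n E (g0 b) a = (if a = b then 1 else 0) - 1 / real n) \<and> (\<Sum>a=1..n. g0 b a) = 0"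
    by metis
  have F1: "bil n E x (g0 b) = x b - (\<Sum>u=1..n. x u) / real n" if b: "b \<in> {1..n}" for x b
  proof -
    have "bil n E x (g0 b) = (\<Sum>u=1..n. (if u = b then x u else 0) - x u / real n)"
      unfolding bil_def
    proof (intro sum.cong refl)
      fix u assume u: "u \<in> {1..n}"
      have L: "lap_apply n E (g0 b) u = (if u = b then 1 else 0) - 1 / real n" using g0 b u by blast
      show "x u * lap_apply n E (g0 b) u = (if u = b then x u else 0) - x u / real n"
        unfolding L by (cases "u = b") (simp_all add: algebra_simps)
    qed
    also have "\<dots> = x b - (\<Sum>u=1..n. x u) / real n"
      using b by (simp add: sum_subtractf sum_divide_distrib)
    finally show ?thesis .
  qed
  have F2: "bil n E x (\<lambda>u. g0 j u - g0 i u) = x j - x i" if "i \<in> {1..n}" "j \<in> {1..n}" for x i j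
    using that by (simp add: bil_diff F1)
  have Gsym: "g0 b a = g0 a b" if a: "a \<in> {1..n}" and b: "b \<in> {1..n}" for a b
  proof -
    have "g0 b a = bil n E (g0 b) (g0 a)" using F1[OF a, of "g0 b"] g0 b by simp
    also have "\<dots> = bil n E (g0 a) (g0 b)" by (rule bil_sym[OF g])
    also have "\<dots> = g0 a b" using F1[OF b, of "g0 a"] g0 a by simp
    finally show ?thesis .
  qed
  define t where "t = (\<Sum>i=1..n. g0 i i)"
  have res: "resistance n E i j = g0 i i + g0 j j - g0 i j - g0 j i" if i: "i \<in> {1..n}" and j: "j \<in> {1..n}" for i j
  proof -
    define v where "v = (\<lambda>u. g0 i u - g0 j u)"
    have lv: "\<forall>u\<in>{1..n}. lap_apply n E v u = (if u = i then 1 else 0) - (if u = j then 1 else 0)"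
      using g0 i j by (simp add: v_def lap_diff)
    show ?thesis unfolding resistance_def
    proof (rule the_equality)
      show "\<exists>v. (\<forall>u\<in>{1..n}. lap_apply n E v u = (if u = i then 1 else 0) - (if u = j then 1 else 0)) \<and>
             g0 i i + g0 j j - g0 i j - g0 j i = v i - v j"
        using lv by (intro exI[of _ v]) (simp add: v_def)
    next
      fix r assume "\<exists>v'. (\<forall>u\<in>{1..n}. lap_apply n E v' u = (if u = i then 1 else 0) - (if u = j then 1 else 0)) \<and> r = v' i - v' j"
      then obtain v' where v': "\<forall>u\<in>{1..n}. lap_apply n E v' u = (if u = i then 1 else 0) - (if u = j then 1 else 0)" "r = v' i - v' j"
        by blast
      have "\<forall>u\<in>{1..n}. lap_apply n E (\<lambda>u. v' u - v u) u = 0" using v'(1) lv by (simp add: lap_diff)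
      from kernel_const[OF g c this i j] have "v' i - v i = v' j - v j" .
      then show "r = g0 i i + g0 j j - g0 i j - g0 j i" using v'(2) by (simp add: v_def)
    qed
  qed
  define f where "f = (\<lambda>i j. g0 i i + g0 j j - g0 i j - g0 j i)"
  have kf: "kirchhoff n E = real n * t"
  proof -
    have "kirchhoff n E = (\<Sum>i=1..n. \<Sum>j=i+1..n. f i j)"
      unfolding kirchhoff_def f_def by (intro sum.cong refl) (auto simp: res)
    moreover have "2 * (\<Sum>i=1..n. \<Sum>j=i+1..n. f i j) = (\<Sum>i=1..n. \<Sum>j=1..n. f i j)"
      by (rule pair_sum) (auto simp: f_def)
    moreover have "(\<Sum>i=1..n. \<Sum>j=1..n. f i j) = 2 * real n * t"
    proof -
      have z1: "(\<Sum>i=1..n. \<Sum>j=1..n. g0 i j) = 0" using g0 by simp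
      have z2: "(\<Sum>i=1..n. \<Sum>j=1..n. g0 j i) = 0" using z1 by (subst sum.swap) simp
      have "(\<Sum>i=1..n. \<Sum>j=1..n. f i j) = (\<Sum>i=1..n. \<Sum>j=1..n. g0 i i) + (\<Sum>i=1..n. \<Sum>j=1..n. g0 j j)
          - (\<Sum>i=1..n. \<Sum>j=1..n. g0 i j) - (\<Sum>i=1..n. \<Sum>j=1..n. g0 j i)"
        unfolding f_def by (simp add: sum.distrib sum_subtractf)
      then show ?thesis using z1 z2 by (simp add: t_def sum_distrib_left[symmetric])
    qed
    ultimately show ?thesis by simp
  qed
  have alpha: "inverse (inverse_perron n E i) \<ge> real n ^ 2 * g0 i i / (real n - 1)" if i: "i \<in> {1..n}" for i
  proof -
    define Q where "Q = {lap_quad n E x | x. (\<forall>j\<in>{1..n}. x j \<ge> 0) \<and> (\<Sum>j=1..n. (x j)\<^sup>2) = 1 \<and> x i = 0}"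
    have ip: "inverse_perron n E i = Inf Q" unfolding Q_def inverse_perron_def ..
    have Qnn: "q \<ge> 0" if "q \<in> Q" for q using that bil_nonneg[OF g] by (auto simp: Q_def lap_quad_bil)
    have bdd: "bdd_below Q" using Qnn by (auto simp: bdd_below_def)
    obtain j0 where j0: "j0 \<in> {1..n}" "j0 \<noteq> i"
    proof (cases "i = 1")
      case True then show ?thesis using that[of 2] True \<open>n \<ge> 2\<close> by auto
    next
      case False then show ?thesis using that[of 1] n1 by auto
    qed
    define e0 where "e0 = (\<lambda>u. if u = j0 then (1::real) else 0)"
    have s1: "(\<Sum>j=1..n. (e0 j)\<^sup>2) = 1"
    proof -
      have "(\<Sum>j=1..n. (e0 j)\<^sup>2) = (\<Sum>j=1..n. if j = j0 then 1 else 0)"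
        by (intro sum.cong refl) (auto simp: e0_def)
      then show ?thesis using j0 by simp
    qed
    have "lap_quad n E e0 \<in> Q"
      unfolding Q_def using j0 s1 by (intro CollectI exI[of _ e0]) (auto simp: e0_def)
    then have Qne: "Q \<noteq> {}" by blast
    define cc where "cc = (\<Sum>j=1..n. g0 j j + g0 i i - g0 i j - g0 j i)"
    have low: "1 \<le> q * cc" if "q \<in> Q" for q
    proof -
      obtain x where x: "q = lap_quad n E x" "\<forall>j\<in>{1..n}. x j \<ge> 0" "(\<Sum>j=1..n. (x j)\<^sup>2) = 1" "x i = 0"
        using \<open>q \<in> Q\<close> unfolding Q_def by blast
      have "(x j)\<^sup>2 \<le> q * (g0 j j + g0 i i - g0 i j - g0 j i)" if j: "j \<in> {1..n}" for j
      proof -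
        define p where "p = (\<lambda>u. g0 j u - g0 i u)"
        have "x j = bil n E x p" using F2[OF i j, of x] x(4) by (simp add: p_def)
        moreover have "bil n E p p = g0 j j + g0 i i - g0 i j - g0 j i"
          using F2[OF i j, of p] by (simp add: p_def)
        ultimately show ?thesis using bil_CS[OF g, of x p] x(1) by (simp add: lap_quad_bil)
      qed
      then have "(\<Sum>j=1..n. (x j)\<^sup>2) \<le> (\<Sum>j=1..n. q * (g0 j j + g0 i i - g0 i j - g0 j i))"
        by (rule sum_mono)
      then show ?thesis using x(3) by (simp add: cc_def sum_distrib_left)
    qed
    have ccpos: "cc > 0"
    proof (rule ccontr)
      assume "\<not> cc > 0"
      obtain q where "q \<in> Q" using Qne by blast
      then have "q \<ge> 0" "1 \<le> q * cc" using Qnn low by auto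
      with \<open>\<not> cc > 0\<close> show False by (smt (verit) mult_nonneg_nonpos)
    qed
    have "1 / cc \<le> Inf Q"
    proof (rule cInf_greatest[OF Qne])
      fix q assume "q \<in> Q"
      then have "1 \<le> q * cc" by (rule low)
      then show "1 / cc \<le> q" using ccpos by (simp add: divide_le_eq mult.commute)
    qed
    then have apos: "inverse_perron n E i > 0" using ccpos ip by (smt (verit) divide_pos_pos)
    define w where "w = (\<lambda>u. real n * g0 i i - real n * g0 i u)"
    define S where "S = (\<Sum>u=1..n. w u)"
    define N2 where "N2 = (\<Sum>u=1..n. (w u)\<^sup>2)"
    have wi: "w i = 0" by (simp add: w_def)
    have Sval: "S = real n ^ 2 * g0 i i"
    proof -
      have "S = (\<Sum>u=1..n. real n * g0 i i) - real n * (\<Sum>u=1..n. g0 i u)"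
        by (simp add: S_def w_def sum_subtractf sum_distrib_left)
      then show ?thesis using g0 i by (simp add: power2_eq_square)
    qed
    have lw: "lap_apply n E w u = 1 - (if u = i then real n else 0)" if u: "u \<in> {1..n}" for u
    proof -
      have "lap_apply n E w u = lap_apply n E (\<lambda>u. real n * g0 i i) u - lap_apply n E (\<lambda>u. real n * g0 i u) u"
        unfolding w_def by (rule lap_diff)
      also have "\<dots> = - real n * lap_apply n E (g0 i) u" by (simp add: lap_const[OF g] lap_scale)
      also have "\<dots> = 1 - (if u = i then real n else 0)"
      proof -
        have L: "lap_apply n E (g0 i) u = (if u = i then 1 else 0) - 1 / real n" using g0 i u by blast
        show ?thesis unfolding L using rn by (cases "u = i") (simp_all add: algebra_simps)
      qed
      finally show ?thesis .
    qed
    have qw: "bil n E w w = S"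
    proof -
      have "bil n E w w = (\<Sum>u=1..n. w u - (if u = i then real n * w u else 0))"
        unfolding bil_def by (intro sum.cong refl) (simp add: lw algebra_simps)
      also have "\<dots> = S" using i wi by (simp add: S_def sum_subtractf)
      finally show ?thesis .
    qed
    have CS: "S\<^sup>2 \<le> (real n - 1) * N2"
    proof -
      have "S = (\<Sum>u\<in>{1..n}-{i}. 1 * w u)" using i wi by (simp add: S_def sum_diff1)
      moreover have "N2 = (\<Sum>u\<in>{1..n}-{i}. (w u)\<^sup>2)" using i wi by (simp add: N2_def sum_diff1)
      moreover have "(\<Sum>u\<in>{1..n}-{i}. (1::real)\<^sup>2) = real n - 1" using i n1 by (simp add: of_nat_diff)
      ultimately show ?thesis using CS_sum[of "\<lambda>_. 1" w "{1..n}-{i}"] by simp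
    qed
    show ?thesis
    proof (cases "N2 = 0")
      case True
      then have "S\<^sup>2 \<le> 0" using CS by simp
      then have "S = 0" by simp
      then have "real n ^ 2 * g0 i i = 0" using Sval by simp
      moreover have "inverse (inverse_perron n E i) > 0" using apos by simp
      ultimately show ?thesis by (simp only:)
    next
      case False
      have "N2 \<ge> 0" unfolding N2_def by (intro sum_nonneg) simp
      then have N2pos: "N2 > 0" using False by simp
      define x where "x = (\<lambda>u. (1 / sqrt N2) * \<bar>w u\<bar>)"
      have xQ: "lap_quad n E x \<in> Q"
        unfolding Q_def
      proof (intro CollectI exI conjI)
        show "\<forall>j\<in>{1..n}. x j \<ge> 0" using N2pos by (simp add: x_def)
        show "x i = 0" by (simp add: x_def wi)
        show "(\<Sum>j=1..n. (x j)\<^sup>2) = 1"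
          using N2pos by (simp add: x_def power_mult_distrib power_divide sum_divide_distrib[symmetric] N2_def)
      qed (rule refl)
      have "lap_quad n E x = (1 / sqrt N2)^2 * bil n E (\<lambda>u. \<bar>w u\<bar>) (\<lambda>u. \<bar>w u\<bar>)"
        unfolding lap_quad_bil x_def bil_scale1 bil_scale2 by (simp add: power2_eq_square)
      also have "\<dots> \<le> (1 / sqrt N2)^2 * S"
        using bil_abs[OF g, of w] qw by (intro mult_left_mono) auto
      also have "\<dots> = S / N2" using N2pos by (simp add: power_divide)
      finally have "Inf Q \<le> S / N2" using cInf_lower[OF xQ bdd] by linarith
      then have aS: "inverse_perron n E i \<le> S / N2" using ip by simp
      then have "S / N2 > 0" using apos by linarith
      then have Spos: "S > 0" using N2pos by (simp add: zero_less_divide_iff)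
      have "inverse (inverse_perron n E i) \<ge> inverse (S / N2)"
        by (rule le_imp_inverse_le[OF aS apos])
      moreover have "inverse (S / N2) \<ge> S / (real n - 1)"
      proof -
        have "real n - 1 > 0" using True by simp
        then have "S * S \<le> N2 * (real n - 1)" using CS by (simp add: power2_eq_square mult.commute)
        then have "S / (real n - 1) * S \<le> N2" using \<open>real n - 1 > 0\<close> by (simp add: divide_le_eq mult.commute mult.left_commute)
        then have "S / (real n - 1) \<le> N2 / S" using Spos by (simp add: le_divide_eq)
        then show ?thesis using Spos N2pos by simp
      qed
      ultimately show ?thesis using Sval by simp
    qed
  qed
  have "(\<Sum>i=1..n. real n ^ 2 * g0 i i / (real n - 1)) \<le> (\<Sum>i=1..n. inverse (inverse_perron n E i))"
    by (rule sum_mono) (rule alpha)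
  then have "real n ^ 2 * t / (real n - 1) \<le> (\<Sum>i=1..n. inverse (inverse_perron n E i))"
    by (simp add: t_def sum_distrib_left sum_divide_distrib)
  moreover have "real n - 1 > 0" using True by simp
  ultimately have "(real n - 1) / real n * (real n ^ 2 * t / (real n - 1)) \<le> (real n - 1) / real n * (\<Sum>i=1..n. inverse (inverse_perron n E i))"
    by (intro mult_left_mono) auto
  moreover have "(real n - 1) / real n * (real n ^ 2 * t / (real n - 1)) = real n * t"
    using rn \<open>real n - 1 > 0\<close> by (simp add: field_simps power2_eq_square)
  ultimately show ?thesis using kf by simp
qed

end
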